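(* Let $g\ge1$, $n=g+1$, and let $Q$ be the $g\times g$ matrix with $Q_{ii}=2$ and $Q_{ij}=1$ for $i\ne j$ (the tropical Riemann matrix of the genus-$g$ banana graph). The Voronoi polytope $V_Q\subset\mathbb R^g$ has dimension $g$ and exactly $2(2^g-1)$ vertices, namely the set $\bigcup_{k=1}^g[\mathbf k]$, where $[\mathbf k]$ is the set of vectors in $\mathbb R^g$ all of whose entries lie in $\{-\tfrac{k}{g+1},\tfrac{g+1-k}{g+1}\}$ and in which the number of entries equal to $\tfrac{g+1-k}{g+1}$ is either $k$ or $k-1$. The $f$-vector $(f_0,\dots,f_{g-1})$ of $V_Q$ is $f_\ell=\binom{g+1}{\ell}(2^{g+1-\ell}-2)$ for $\ell=0,\dots,g-1$.
   Context: $V_Q=\{\mathbf a\in\mathbb R^g:\ \mathbf a^TQ\mathbf a\le(\mathbf a-\mathbf c)^TQ(\mathbf a-\mathbf c)\ \text{for all }\mathbf c\in\mathbb Z^g\}$. The banana graph of genus $g$ has two vertices $v_1,v_2$ joined by $n=g+1$ edges $e_1,\dots,e_n$; with all edges oriented from $v_2$ to $v_1$ and cycle basis $e_1-e_2,\dots,e_1-e_{g+1}$, the matrix $B\in\mathbb Z^{g\times n}$ has $B_{i,1}=1$, $B_{i,i+1}=-1$ and other entries $0$, and $Q=BB^T$. *)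

theory Defs
  imports "HOL-Analysis.Analysis"
begin

text \<open>Integer lattice points in R^g (index type 'n, g = CARD('n)).\<close>
definition int_vectors :: "(real ^ 'n) set" where
  "int_vectors = {c. \<forall>i. c $ i \<in> \<int>}"

definition voronoi :: "real ^ 'n ^ 'n \<Rightarrow> (real ^ 'n) set" where
  "voronoi Q = {a. \<forall>c \<in> int_vectors. a \<bullet> (Q *v a) \<le> (a - c) \<bullet> (Q *v (a - c))}"

definition banana_Q :: "real ^ 'n ^ 'n" where
  "banana_Q = (\<chi> i j. if i = j then 2 else 1)"

definition bracket_k :: "nat \<Rightarrow> (real ^ 'n) set" where
  "bracket_k k = {x. let g = CARD('n); hi = (real g + 1 - real k) / (real g + 1);
                        lo = - real k / (real g + 1) in
                     (\<forall>i. x $ i \<in> {lo, hi}) \<and>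
                     (card {i. x $ i = hi} = k \<or> card {i. x $ i = hi} = k - 1)}"

end

theory Submission
  imports Defs
begin


definition Y :: "real^'n::finite \<Rightarrow> 'n option \<Rightarrow> real" where
  "Y x p = (case p of None \<Rightarrow> - (\<Sum>i\<in>UNIV. x$i) | Some i \<Rightarrow> x$i)"

definition toA :: "('n::finite option \<Rightarrow> real) \<Rightarrow> real^'n" where
  "toA v = (\<chi> i. v (Some i))"

definition yv :: "'n::finite option \<Rightarrow> real^'n" where
  "yv p = (case p of None \<Rightarrow> (\<chi> i. -1) | Some i \<Rightarrow> axis i 1)"

lemma sum_option: "sum f (UNIV :: 'n::finite option set) = f None + (\<Sum>i\<in>UNIV. f (Some i))"
proof -
  have "sum f (UNIV :: 'n option set) = sum f (insert None (range Some))"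
    by (simp add: UNIV_option_conv[symmetric])
  also have "\<dots> = f None + sum f (range Some)" by (subst sum.insert) auto
  also have "sum f (range Some) = (\<Sum>i\<in>UNIV. f (Some i))"
    by (subst sum.reindex) (auto simp: inj_def)
  finally show ?thesis .
qed

lemma Y_Some[simp]: "Y x (Some i) = x$i" by (simp add: Y_def)
lemma Y_None[simp]: "Y x None = - (\<Sum>i\<in>UNIV. x$i)" by (simp add: Y_def)

lemma Y_inner: "Y x p = yv p \<bullet> x"
proof (cases p)
  case None then show ?thesis by (simp add: yv_def inner_vec_def sum_negf)
next
  case (Some a)
  have "yv p \<bullet> x = (\<Sum>i\<in>UNIV. (if i = a then 1 else 0) * x$i)"
    unfolding Some yv_def inner_vec_def by (simp add: axis_def)
  also have "\<dots> = (\<Sum>i\<in>UNIV. if i = a then x$i else 0)"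
    by (rule sum.cong) auto
  finally have "yv p \<bullet> x = (\<Sum>i\<in>UNIV. if i = a then x$i else 0)" .
  then show ?thesis using Some by simp
qed

lemma Y_add: "Y (x + y) p = Y x p + Y y p"
  by (cases p) (auto simp: sum.distrib)
lemma Y_diff: "Y (x - y) p = Y x p - Y y p"
  by (cases p) (auto simp: sum_subtractf)
lemma Y_scale: "Y (c *\<^sub>R x) p = c * Y x p"
  by (cases p) (auto simp: sum_distrib_left)
lemma Y_zero: "Y 0 p = 0"
  by (cases p) auto
lemma Y_sum: "Y (\<Sum>r\<in>R. f r) p = (\<Sum>r\<in>R. Y (f r) p)"
  by (cases p) (auto simp: sum_negf intro: sum.swap)

lemma sum_Y: "(\<Sum>p\<in>UNIV. Y x p) = 0"
  by (simp add: sum_option)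

lemma Y_toA: "sum v UNIV = 0 \<Longrightarrow> Y (toA v) p = v p"
  by (cases p) (auto simp: toA_def sum_option)

lemma toA_Y: "toA (Y x) = x"
  by (simp add: toA_def vec_eq_iff)

lemma vec_eq_Y: "(\<And>p. Y x p = Y y p) \<Longrightarrow> x = y"
  by (metis toA_Y ext)

lemma banana_bilinear: "x \<bullet> ((banana_Q::real^'n::finite^'n) *v y) = (\<Sum>p\<in>UNIV. Y x p * Y y p)"
proof -
  have row: "((banana_Q::real^'n^'n) *v y) $ i = y$i + (\<Sum>j\<in>UNIV. y$j)" for i
  proof -
    have "((banana_Q::real^'n^'n) *v y) $ i = (\<Sum>j\<in>UNIV. y$j + (if i = j then y$j else 0))"
      by (auto simp: matrix_vector_mult_def banana_Q_def intro!: sum.cong)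
    also have "\<dots> = y$i + (\<Sum>j\<in>UNIV. y$j)" by (simp add: sum.distrib)
    finally show ?thesis .
  qed
  have "x \<bullet> ((banana_Q::real^'n^'n) *v y) = (\<Sum>i\<in>UNIV. x$i * y$i + x$i * (\<Sum>j\<in>UNIV. y$j))"
    by (simp add: inner_vec_def row algebra_simps)
  also have "\<dots> = (\<Sum>i\<in>UNIV. x$i * y$i) + (\<Sum>i\<in>UNIV. x$i) * (\<Sum>j\<in>UNIV. y$j)"
    by (simp add: sum.distrib sum_distrib_right)
  also have "\<dots> = (\<Sum>p\<in>UNIV. Y x p * Y y p)"
    by (simp add: sum_option)
  finally show ?thesis .
qed

definition V0 :: "(real^'n::finite) set" where
  "V0 = {x. \<forall>p q. Y x p - Y x q \<le> 1}"

lemma int_term: "z \<in> \<int> \<Longrightarrow> 0 \<le> t \<Longrightarrow> t \<le> (1::real) \<Longrightarrow> 2 * z * t \<le> z^2 + z"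
proof -
  assume "z \<in> \<int>" "0 \<le> t" "t \<le> 1"
  then obtain k where k: "z = of_int k" by (auto elim: Ints_cases)
  show ?thesis
  proof (cases "k \<ge> 1")
    case True
    then have "z \<ge> 1" using k by simp
    then have "2*z*t \<le> 2*z" using \<open>t\<le>1\<close> by simp
    also have "\<dots> \<le> z^2 + z" using \<open>z\<ge>1\<close> by (simp add: power2_eq_square)
    finally show ?thesis .
  next
    case False
    then have "k \<le> 0" by simp
    then have z0: "z \<le> 0" using k by simp
    have "2*z*t \<le> 0" using z0 \<open>0\<le>t\<close> by (simp add: mult_nonpos_nonneg)
    moreover have "z^2 + z \<ge> 0"
    proof (cases "k = 0")
      case True then show ?thesis using k by simp
    next
      case False
      then have "z \<le> -1" using k \<open>k\<le>0\<close> by simp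
      then have "z * (z+1) \<ge> 0" by (simp add: mult_nonpos_nonpos)
      then show ?thesis by (simp add: power2_eq_square algebra_simps)
    qed
    ultimately show ?thesis by linarith
  qed
qed

lemma voronoi_eq: "voronoi (banana_Q::real^'n::finite^'n) = V0"
proof -
  have key: "(x - c) \<bullet> ((banana_Q::real^'n^'n) *v (x - c)) - x \<bullet> (banana_Q *v x)
      = (\<Sum>p\<in>UNIV. (Y c p)^2) - 2 * (\<Sum>p\<in>UNIV. Y c p * Y x p)" for x c :: "real^'n"
    by (simp add: banana_bilinear Y_diff power2_eq_square algebra_simps sum_subtractf sum.distrib sum_distrib_left)
  have mem: "x \<in> voronoi (banana_Q::real^'n^'n) \<longleftrightarrow>
      (\<forall>c\<in>int_vectors. 2 * (\<Sum>p\<in>UNIV. Y c p * Y x p) \<le> (\<Sum>p\<in>UNIV. (Y c p)^2))" for x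
  proof -
    have "(x \<bullet> (banana_Q *v x) \<le> (x - c) \<bullet> ((banana_Q::real^'n^'n) *v (x - c))) \<longleftrightarrow>
          2 * (\<Sum>p\<in>UNIV. Y c p * Y x p) \<le> (\<Sum>p\<in>UNIV. (Y c p)^2)" for c
      using key[of x c] by linarith
    then show ?thesis unfolding voronoi_def by auto
  qed
  show ?thesis
  proof (intro set_eqI iffI)
    fix x :: "real^'n"
    assume x: "x \<in> voronoi banana_Q"
    show "x \<in> V0" unfolding V0_def
    proof (intro CollectI allI)
      fix p q
      show "Y x p - Y x q \<le> 1"
      proof (cases "p = q")
        case True then show ?thesis by simp
      next
        case False
        define v where "v = (\<lambda>s. (if s = p then 1 else 0) - (if s = q then 1 else (0::real)))"
        have sv: "sum v UNIV = 0" by (simp add: v_def sum_subtractf)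
        have c_int: "toA v \<in> int_vectors"
          by (auto simp: int_vectors_def toA_def v_def)
        have Yc: "Y (toA v) = v" using Y_toA[OF sv] by auto
        have s1: "(\<Sum>s\<in>UNIV. v s * Y x s) = Y x p - Y x q"
        proof -
          have "(\<Sum>s\<in>UNIV. v s * Y x s) = (\<Sum>s\<in>UNIV. (if s = p then Y x s else 0) - (if s = q then Y x s else 0))"
            by (rule sum.cong) (auto simp: v_def)
          also have "\<dots> = Y x p - Y x q" by (simp add: sum_subtractf)
          finally show ?thesis .
        qed
        have s2: "(\<Sum>s\<in>UNIV. (v s)^2) = 2"
        proof -
          have "(\<Sum>s\<in>UNIV. (v s)^2) = (\<Sum>s\<in>UNIV. (if s = p then 1 else 0) + (if s = q then 1 else (0::real)))"
            by (rule sum.cong) (auto simp: v_def False)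
          also have "\<dots> = 2" by (simp add: sum.distrib)
          finally show ?thesis .
        qed
        show ?thesis using x c_int unfolding mem by (auto simp: Yc s1 s2 dest!: bspec)
      qed
    qed
  next
    fix x :: "real^'n"
    assume x: "x \<in> V0"
    show "x \<in> voronoi banana_Q" unfolding mem
    proof
      fix c :: "real^'n" assume c: "c \<in> int_vectors"
      have zint: "Y c p \<in> \<int>" for p
        using c by (cases p) (auto simp: int_vectors_def intro!: Ints_sum)
      define m where "m = Min (range (Y x))"
      have "m \<in> range (Y x)" unfolding m_def by (rule Min_in) auto
      then obtain q where q: "m = Y x q" by auto
      have t0: "0 \<le> Y x s - m" for s unfolding m_def by (simp add: Min_le)
      have t1: "Y x s - m \<le> 1" for s using x q by (auto simp: V0_def)
      have "(\<Sum>p\<in>UNIV. 2 * Y c p * (Y x p - m)) \<le> (\<Sum>p\<in>UNIV. (Y c p)^2 + Y c p)"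
        by (rule sum_mono) (rule int_term[OF zint t0 t1])
      then have "2 * (\<Sum>p\<in>UNIV. Y c p * Y x p) - 2 * m * (\<Sum>p\<in>UNIV. Y c p)
          \<le> (\<Sum>p\<in>UNIV. (Y c p)^2) + (\<Sum>p\<in>UNIV. Y c p)"
        by (simp add: algebra_simps sum.distrib sum_subtractf sum_distrib_left sum_distrib_right)
      then show "2 * (\<Sum>p\<in>UNIV. Y c p * Y x p) \<le> (\<Sum>p\<in>UNIV. (Y c p)^2)"
        by (simp add: sum_Y)
    qed
  qed
qed



abbreviation NN :: "'n::finite itself \<Rightarrow> real" where
  "NN _ \<equiv> real CARD('n option)"

definition ctr :: "('n::finite option \<Rightarrow> real) \<Rightarrow> 'n option \<Rightarrow> real" where
  "ctr c p = c p - sum c UNIV / real CARD('n option)"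

definition pt :: "('n::finite option \<Rightarrow> real) \<Rightarrow> real^'n" where
  "pt c = toA (ctr c)"

lemma sum_ctr: "sum (ctr (c::'n::finite option \<Rightarrow> real)) UNIV = 0"
proof -
  have "real CARD('n option) > 0" by simp
  then show ?thesis by (simp add: ctr_def sum_subtractf)
qed

lemma Y_pt: "Y (pt c) p = ctr c p"
  by (simp add: pt_def Y_toA[OF sum_ctr])

lemma Y_pt_diff: "Y (pt c) p - Y (pt c) q = c p - c q"
  by (simp add: Y_pt ctr_def)

lemma pt_in_V0: "pt c \<in> V0 \<longleftrightarrow> (\<forall>p q. c p - c q \<le> 1)"
  by (simp add: V0_def Y_pt_diff)

lemma pt_comp: "(pt (c::'n::finite option \<Rightarrow> real)) $ i = c (Some i) - sum c UNIV / real CARD('n option)"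
  by (simp add: pt_def toA_def ctr_def)

lemma V0_bound:
  assumes "x \<in> V0" shows "\<bar>Y x p\<bar> \<le> 1"
proof -
  have "\<exists>q. Y x q \<le> 0"
  proof (rule ccontr)
    assume "\<not> ?thesis"
    then have "\<forall>q. Y x q > 0" by (meson not_le)
    then have "(\<Sum>q\<in>UNIV. Y x q) > 0" by (intro sum_pos) auto
    then show False by (simp add: sum_Y)
  qed
  then obtain q where q: "Y x q \<le> 0" by auto
  have "\<exists>q. Y x q \<ge> 0"
  proof (rule ccontr)
    assume "\<not> ?thesis"
    then have "\<forall>q. Y x q < 0" by (meson not_le)
    then have "(\<Sum>q\<in>UNIV. - Y x q) > 0" by (intro sum_pos) auto
    then show False by (simp add: sum_Y sum_negf)
  qed
  then obtain q' where q': "Y x q' \<ge> 0" by auto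
  have "Y x p - Y x q \<le> 1" "Y x q' - Y x p \<le> 1" using assms by (auto simp: V0_def)
  then show ?thesis using q q' by linarith
qed

lemma bounded_V0: "bounded (V0 :: (real^'n::finite) set)"
  unfolding bounded_iff
proof (intro exI ballI)
  fix x :: "real^'n" assume x: "x \<in> V0"
  have "norm x \<le> (\<Sum>i\<in>UNIV. \<bar>x$i\<bar>)" by (rule norm_le_l1_cart)
  also have "\<dots> \<le> (\<Sum>i\<in>(UNIV::'n set). 1)"
    by (rule sum_mono) (metis V0_bound[OF x, of "Some _"] Y_Some)
  finally show "norm x \<le> real CARD('n)" by simp
qed

lemma V0_Inter: "(V0 :: (real^'n::finite) set) = \<Inter> ((\<lambda>(p,q). {x. (yv p - yv q) \<bullet> x \<le> 1}) ` UNIV)"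
  by (auto simp: V0_def inner_diff_left Y_inner[symmetric])

lemma polyhedron_V0: "polyhedron (V0 :: (real^'n::finite) set)"
  by (subst V0_Inter) (auto intro!: polyhedron_Inter polyhedron_halfspace_le)

lemma polytope_V0: "polytope (V0 :: (real^'n::finite) set)"
  by (simp add: polytope_eq_bounded_polyhedron polyhedron_V0 bounded_V0)

lemma convex_V0: "convex (V0 :: (real^'n::finite) set)"
  by (simp add: polyhedron_V0 polyhedron_imp_convex)

lemma aff_dim_V0: "aff_dim (V0 :: (real^'n::finite) set) = int CARD('n)"
proof -
  define Op where "Op = \<Inter> ((\<lambda>(p,q). {x::real^'n. (yv p - yv q) \<bullet> x < 1}) ` UNIV)"
  have "open Op" unfolding Op_def
    by (intro open_Inter) (auto intro: open_halfspace_lt)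
  moreover have "0 \<in> Op" by (auto simp: Op_def)
  moreover have "Op \<subseteq> V0"
  proof
    fix x assume "x \<in> Op"
    then have "(yv p - yv q) \<bullet> x < 1" for p q unfolding Op_def by blast
    then have "Y x p - Y x q \<le> 1" for p q by (simp add: Y_inner inner_diff_left less_imp_le)
    then show "x \<in> V0" by (simp add: V0_def)
  qed
  ultimately have "aff_dim Op \<le> aff_dim (V0 :: (real^'n) set)" "aff_dim Op = int CARD('n)"
    using aff_dim_subset aff_dim_open[of Op] by auto
  moreover have "aff_dim (V0 :: (real^'n) set) \<le> int CARD('n)"
    using aff_dim_le_DIM[of "V0 :: (real^'n) set"] by simp
  ultimately show ?thesis by linarith
qed

definition G :: "'n::finite option set \<Rightarrow> 'n option set \<Rightarrow> (real^'n) set" where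
  "G T B = {x \<in> V0. \<forall>p\<in>T. \<forall>q\<in>B. Y x p - Y x q = 1}"

lemma G_face: "G T B face_of V0"
proof -
  define w where "w = (\<Sum>pq\<in>T \<times> B. yv (fst pq) - yv (snd pq))"
  have w: "w \<bullet> x = (\<Sum>pq\<in>T \<times> B. Y x (fst pq) - Y x (snd pq))" for x
    by (simp add: w_def inner_sum_left inner_diff_left Y_inner)
  have le: "w \<bullet> x \<le> real (card (T \<times> B))" if "x \<in> V0" for x
  proof -
    have "w \<bullet> x \<le> (\<Sum>pq\<in>T \<times> B. 1)" unfolding w
      by (rule sum_mono) (use that in \<open>auto simp: V0_def\<close>)
    then show ?thesis by simp
  qed
  have eq: "G T B = V0 \<inter> {x. w \<bullet> x = real (card (T \<times> B))}"
  proof (intro set_eqI iffI)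
    fix x assume x: "x \<in> G T B"
    have "(\<Sum>pq\<in>T\<times>B. Y x (fst pq) - Y x (snd pq)) = (\<Sum>pq\<in>T\<times>B. 1)"
      by (rule sum.cong) (use x in \<open>auto simp: G_def\<close>)
    then show "x \<in> V0 \<inter> {x. w \<bullet> x = real (card (T \<times> B))}"
      using x by (simp add: G_def w)
  next
    fix x assume x: "x \<in> V0 \<inter> {x. w \<bullet> x = real (card (T \<times> B))}"
    then have "(\<Sum>pq\<in>T \<times> B. 1 - (Y x (fst pq) - Y x (snd pq))) = 0"
      by (simp add: sum_subtractf w)
    moreover have "\<forall>pq\<in>T\<times>B. 0 \<le> 1 - (Y x (fst pq) - Y x (snd pq))"
      using x by (auto simp: V0_def)
    ultimately have "\<forall>pq\<in>T\<times>B. 1 - (Y x (fst pq) - Y x (snd pq)) = 0"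
      using sum_nonneg_eq_0_iff[of "T\<times>B" "\<lambda>pq. 1 - (Y x (fst pq) - Y x (snd pq))"] by fastforce
    then show "x \<in> G T B" using x by (auto simp: G_def)
  qed
  show ?thesis unfolding eq
    by (rule face_of_Int_supporting_hyperplane_le[OF convex_V0 le])
qed



definition Hs :: "'n::finite option \<times> 'n option \<Rightarrow> (real^'n) set" where
  "Hs pq = {x. (yv (fst pq) - yv (snd pq)) \<bullet> x \<le> 1}"

lemma in_Hs: "x \<in> Hs pq \<longleftrightarrow> Y x (fst pq) - Y x (snd pq) \<le> 1"
  by (simp add: Hs_def inner_diff_left Y_inner)

definition tp :: "'n::finite option \<Rightarrow> 'n option \<Rightarrow> real^'n" where
  "tp p q = pt (\<lambda>s. if s = p then 3/4 else if s = q then -3/4 else 0)"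

lemma tp_diff: "p \<noteq> q \<Longrightarrow> Y (tp p q) p - Y (tp p q) q = 3/2"
  by (simp add: tp_def Y_pt_diff)

lemma tp_other: "p \<noteq> q \<Longrightarrow> (s, s') \<noteq> (p, q) \<Longrightarrow> Y (tp p q) s - Y (tp p q) s' \<le> 1"
  by (auto simp: tp_def Y_pt_diff)

lemma affine_hull_V0: "affine hull (V0 :: (real^'n::finite) set) = UNIV"
  using aff_dim_eq_full[of "V0 :: (real^'n) set"] aff_dim_V0[where 'n='n] by simp

lemma face_char:
  fixes C :: "(real^'n::finite) set"
  assumes C: "C face_of V0" "C \<noteq> {}" "C \<noteq> V0"
  shows "\<exists>T B. T \<noteq> {} \<and> B \<noteq> {} \<and> T \<inter> B = {} \<and> C = G T B"
proof -
  define Pairs where "Pairs = {pq :: 'n option \<times> 'n option. fst pq \<noteq> snd pq}"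
  define F where "F = Hs ` Pairs"
  define pick where "pick h = (SOME pq. pq \<in> Pairs \<and> h = Hs pq)" for h
  define a where "a h = yv (fst (pick h)) - yv (snd (pick h))" for h
  define b where "b h = (1::real)" for h :: "(real^'n) set"
  have pick: "pick h \<in> Pairs \<and> h = Hs (pick h)" if "h \<in> F" for h
  proof -
    have "\<exists>pq. pq \<in> Pairs \<and> h = Hs pq" using that by (auto simp: F_def)
    then show ?thesis unfolding pick_def by (rule someI_ex)
  qed
  have a_inner: "a h \<bullet> x = Y x (fst (pick h)) - Y x (snd (pick h))" for h x
    by (simp add: a_def inner_diff_left Y_inner)
  have finF: "finite F" by (simp add: F_def)
  have V0F: "V0 = \<Inter>F"
    unfolding F_def Pairs_def V0_def
    by (auto simp: in_Hs) (metis diff_self zero_less_one less_imp_le)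
  have seq: "V0 = affine hull V0 \<inter> \<Inter>F" unfolding affine_hull_V0 using V0F by simp
  have faceq: "a h \<noteq> 0 \<and> h = {x. a h \<bullet> x \<le> b h}" if hF: "h \<in> F" for h
  proof
    obtain p q where pq: "pick h = (p, q)" "p \<noteq> q" using pick[OF hF] by (cases "pick h") (auto simp: Pairs_def)
    show "a h \<noteq> 0"
    proof
      assume "a h = 0"
      then have "a h \<bullet> tp p q = 0" by simp
      then show False using tp_diff[OF pq(2)] by (simp add: a_inner pq)
    qed
    show "h = {x. a h \<bullet> x \<le> b h}"
      using pick[OF hF] by (auto simp: b_def a_inner in_Hs[symmetric])
  qed
  have psub: "V0 \<subset> affine hull V0 \<inter> \<Inter>F'" if FF: "F' \<subset> F" for F'
  proof -
    obtain h where h: "h \<in> F" "h \<notin> F'" using FF by auto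
    then obtain p q where pq: "(p,q) \<in> Pairs" "h = Hs (p,q)" by (auto simp: F_def)
    then have pq2: "p \<noteq> q" by (simp add: Pairs_def)
    have "tp p q \<notin> V0"
    proof
      assume "tp p q \<in> V0"
      then have "Y (tp p q) p - Y (tp p q) q \<le> 1" by (simp add: V0_def)
      then show False using tp_diff[OF pq2] by simp
    qed
    moreover have "tp p q \<in> \<Inter>F'"
    proof
      fix h' assume h': "h' \<in> F'"
      then have "h' \<in> F" using FF by auto
      then obtain pq' where pq': "pq' \<in> Pairs" "h' = Hs pq'" unfolding F_def by blast
      then have "pq' \<noteq> (p,q)" using h h' pq by auto
      then show "tp p q \<in> h'" using pq' tp_other[OF pq2, of "fst pq'" "snd pq'"]
        by (simp add: in_Hs)
    qed
    moreover have "V0 \<subseteq> \<Inter>F'" using V0F FF by auto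
    ultimately show ?thesis using affine_hull_V0 by auto
  qed
  have Ceq: "C = \<Inter>{V0 \<inter> {x. a h \<bullet> x = b h} | h. h \<in> F \<and> C \<subseteq> V0 \<inter> {x. a h \<bullet> x = b h}}"
    by (rule face_of_polyhedron_explicit[OF finF seq faceq psub C]) auto
  define E where "E = {pq \<in> Pairs. \<forall>x\<in>C. Y x (fst pq) - Y x (snd pq) = 1}"
  have CV: "C \<subseteq> V0" using C(1) face_of_imp_subset by auto
  have Ceq2: "C = {x \<in> V0. \<forall>pq\<in>E. Y x (fst pq) - Y x (snd pq) = 1}"
  proof (intro set_eqI iffI)
    fix x assume "x \<in> C" then show "x \<in> {x \<in> V0. \<forall>pq\<in>E. Y x (fst pq) - Y x (snd pq) = 1}"
      using CV by (auto simp: E_def)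
  next
    fix x assume x: "x \<in> {x \<in> V0. \<forall>pq\<in>E. Y x (fst pq) - Y x (snd pq) = 1}"
    have "x \<in> \<Inter>{V0 \<inter> {x. a h \<bullet> x = b h} | h. h \<in> F \<and> C \<subseteq> V0 \<inter> {x. a h \<bullet> x = b h}}"
    proof
      fix S assume "S \<in> {V0 \<inter> {x. a h \<bullet> x = b h} | h. h \<in> F \<and> C \<subseteq> V0 \<inter> {x. a h \<bullet> x = b h}}"
      then obtain h where h: "h \<in> F" "C \<subseteq> V0 \<inter> {x. a h \<bullet> x = b h}" "S = V0 \<inter> {x. a h \<bullet> x = b h}"
        by blast
      then have "pick h \<in> E" using pick[OF h(1)] by (auto simp: E_def a_inner b_def)
      then show "x \<in> S" using x h(3) by (auto simp: a_inner b_def)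
    qed
    then show "x \<in> C" by (subst Ceq)
  qed
  obtain c where c: "c \<in> C" using C(2) by auto
  have Ene: "E \<noteq> {}"
  proof
    assume "E = {}"
    then have "C = V0" using Ceq2 by simp
    then show False using C(3) by simp
  qed
  define T where "T = fst ` E"
  define B where "B = snd ` E"
  have "T \<noteq> {}" "B \<noteq> {}" using Ene by (auto simp: T_def B_def)
  moreover have "T \<inter> B = {}"
  proof (rule ccontr)
    assume "T \<inter> B \<noteq> {}"
    then obtain p q0 p0 where "(p, q0) \<in> E" "(p0, p) \<in> E" by (force simp: T_def B_def)
    then have "Y c p - Y c q0 = 1" "Y c p0 - Y c p = 1" using c by (auto simp: E_def)
    moreover have "Y c p0 - Y c q0 \<le> 1" using c CV by (auto simp: V0_def)
    ultimately show False by linarith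
  qed
  moreover have "C = G T B"
  proof -
    have "(\<forall>pq\<in>E. Y x (fst pq) - Y x (snd pq) = 1) \<longleftrightarrow> (\<forall>p\<in>T. \<forall>q\<in>B. Y x p - Y x q = 1)"
      if x: "x \<in> V0" for x
    proof
      assume H: "\<forall>pq\<in>E. Y x (fst pq) - Y x (snd pq) = 1"
      show "\<forall>p\<in>T. \<forall>q\<in>B. Y x p - Y x q = 1"
      proof (intro ballI)
        fix p q assume "p \<in> T" "q \<in> B"
        then obtain q0 p0 where "(p, q0) \<in> E" "(p0, q) \<in> E" by (force simp: T_def B_def)
        then have "Y x p - Y x q0 = 1" "Y x p0 - Y x q = 1" using H by auto
        moreover have "Y x p0 - Y x q0 \<le> 1" "Y x p - Y x q \<le> 1" using x by (auto simp: V0_def)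
        ultimately show "Y x p - Y x q = 1" by linarith
      qed
    next
      assume "\<forall>p\<in>T. \<forall>q\<in>B. Y x p - Y x q = 1"
      then show "\<forall>pq\<in>E. Y x (fst pq) - Y x (snd pq) = 1" by (auto simp: T_def B_def)
    qed
    then show ?thesis using Ceq2 by (auto simp: G_def)
  qed
  ultimately show ?thesis by blast
qed



definition c0 :: "'n::finite option set \<Rightarrow> 'n option set \<Rightarrow> 'n option \<Rightarrow> real" where
  "c0 T B p = (if p \<in> T then 1 else if p \<in> B then 0 else 1/2)"

lemma c0_in_G:
  assumes "T \<inter> B = {}"
  shows "pt (c0 T B) \<in> G T B"
  using assms by (auto simp: G_def pt_in_V0 Y_pt_diff c0_def)

lemma c0_in_G_sub:
  assumes "pt (c0 T B) \<in> G T' B'" "T' \<noteq> {}" "B' \<noteq> {}" "T \<inter> B = {}"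
  shows "T' \<subseteq> T \<and> B' \<subseteq> B"
proof -
  have H: "c0 T B p - c0 T B q = 1" if "p \<in> T'" "q \<in> B'" for p q
    using assms(1) that by (auto simp: G_def Y_pt_diff)
  have "p \<in> T \<and> q \<in> B" if "p \<in> T'" "q \<in> B'" for p q
    using H[OF that] by (auto simp: c0_def split: if_splits)
  then show ?thesis using assms(2,3) by blast
qed

lemma G_inj:
  assumes "T \<noteq> {}" "B \<noteq> {}" "T \<inter> B = {}" "T' \<noteq> {}" "B' \<noteq> {}" "T' \<inter> B' = {}"
    and "G T B = G T' B'"
  shows "T = T' \<and> B = B'"
  using c0_in_G_sub[of T B T' B'] c0_in_G_sub[of T' B' T B] c0_in_G[of T B] c0_in_G[of T' B'] assms
  by auto

lemma aff_dim_G: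
  fixes T B :: "'n::finite option set"
  assumes TB: "T \<noteq> {}" "B \<noteq> {}" "T \<inter> B = {}"
  shows "aff_dim (G T B) = int (CARD('n option) - card T - card B)"
proof -
  define U where "U = T \<union> B"
  define R where "R = UNIV - U"
  define u where "u = real (card U)"
  have cardU: "card U = card T + card B" unfolding U_def using TB by (simp add: card_Un_disjoint)
  have "card T \<ge> 1" "card B \<ge> 1" using TB by (auto simp: Suc_le_eq card_gt_0_iff)
  then have u2: "u \<ge> 2" by (simp add: u_def cardU)
  have cardR: "card R = CARD('n option) - card T - card B"
    unfolding R_def by (simp add: card_Diff_subset cardU)
  define a0 where "a0 = pt (c0 T B)"
  have a0G: "a0 \<in> G T B" unfolding a0_def by (rule c0_in_G[OF TB(3)])
  define \<delta> where "\<delta> r s = (if s = r then 1 else 0) - (if s \<in> U then 1/u else 0)" for r s :: "'n option"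
  have sum_\<delta>: "sum (\<delta> r) UNIV = 0" for r
  proof -
    have "sum (\<delta> r) UNIV = 1 - (\<Sum>s\<in>UNIV. if s \<in> U then 1/u else 0)"
      by (simp add: \<delta>_def sum_subtractf)
    also have "(\<Sum>s\<in>UNIV. if s \<in> U then 1/u else 0) = (\<Sum>s\<in>U. 1/u)"
      by (simp add: sum.If_cases)
    also have "\<dots> = 1" using u2 by (simp add: u_def) (metis card.empty not_numeral_le_zero)
    finally show ?thesis by simp
  qed
  define bw where "bw r = (1/4::real) *\<^sub>R toA (\<delta> r)" for r
  have Ybw: "Y (bw r) s = (1/4) * \<delta> r s" for r s
    by (simp add: bw_def Y_scale Y_toA[OF sum_\<delta>])
  have bwD: "bw r \<in> (+) (- a0) ` G T B" if r: "r \<in> R" for r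
  proof -
    define c' where "c' s = c0 T B s + (1/4) * \<delta> r s" for s
    have sc': "sum c' UNIV = sum (c0 T B) UNIV"
      by (simp add: c'_def sum.distrib sum_divide_distrib[symmetric] sum_\<delta>)
    have eq: "a0 + bw r = pt c'"
    proof (rule vec_eq_Y)
      fix s show "Y (a0 + bw r) s = Y (pt c') s"
        by (simp add: Y_add a0_def Y_pt Ybw ctr_def sc') (simp add: c'_def)
    qed
    define \<epsilon> where "\<epsilon> = 1 / (4*u)"
    have eps: "0 < \<epsilon>" "\<epsilon> \<le> 1/8" using u2 by (auto simp: \<epsilon>_def field_simps)
    have rU: "r \<notin> T" "r \<notin> B" using r by (auto simp: R_def U_def)
    have cT: "c' s = 1 - \<epsilon>" if "s \<in> T" for s
      using that rU by (auto simp: c'_def c0_def \<delta>_def \<epsilon>_def U_def)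
    have cB: "c' s = - \<epsilon>" if "s \<in> B" for s
      using that rU TB(3) by (auto simp: c'_def c0_def \<delta>_def \<epsilon>_def U_def)
    have cO: "c' s \<le> 3/4" "c' s \<ge> 1/2" if "s \<notin> T" "s \<notin> B" for s
      using that by (auto simp: c'_def c0_def \<delta>_def U_def)
    have clow: "c' s \<ge> - \<epsilon>" for s
      using cT cB cO eps by (cases "s \<in> T"; cases "s \<in> B") force+
    have cup: "c' s \<le> 1 - \<epsilon>" for s
      using cT cB cO eps by (cases "s \<in> T"; cases "s \<in> B") force+
    have cup2: "c' s \<le> 3/4" if "s \<notin> T" for s
      using that cB cO eps by (cases "s \<in> B") force+
    have "pt c' \<in> V0" unfolding pt_in_V0
    proof (intro allI)
      fix s s'
      show "c' s - c' s' \<le> 1"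
      proof (cases "s \<in> T")
        case True then show ?thesis using cT clow[of s'] by force
      next
        case False then show ?thesis using cup2 clow[of s'] eps by force
      qed
    qed
    moreover have "\<forall>p\<in>T. \<forall>q\<in>B. Y (pt c') p - Y (pt c') q = 1"
      using cT cB by (simp add: Y_pt_diff)
    ultimately have "a0 + bw r \<in> G T B" using eq by (simp add: G_def)
    then show ?thesis by (rule rev_image_eqI) simp
  qed
  have Dspan: "(+) (- a0) ` G T B \<subseteq> span (bw ` R)"
  proof
    fix z assume "z \<in> (+) (- a0) ` G T B"
    then obtain x where x: "x \<in> G T B" "z = x - a0" by auto
    define d where "d = Y (x - a0)"
    obtain t0 where t0: "t0 \<in> T" using TB by auto
    obtain b0 where b0: "b0 \<in> B" using TB by auto
    have dTB: "d p = d q" if "p \<in> T" "q \<in> B" for p q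
    proof -
      have "Y x p - Y x q = 1" "Y a0 p - Y a0 q = 1" using x(1) a0G that by (auto simp: G_def)
      then show ?thesis by (simp add: d_def Y_diff)
    qed
    have dU: "d s = d t0" if "s \<in> U" for s
      using that dTB t0 b0 by (auto simp: U_def) (metis dTB)
    have sumd: "sum d UNIV = 0" by (simp add: d_def sum_Y)
    have "sum d UNIV = sum d R + sum d U"
      unfolding R_def by (simp add: sum.subset_diff[of U UNIV])
    moreover have "sum d U = u * d t0" using dU by (simp add: u_def)
    ultimately have sumR: "sum d R = - u * d t0" using sumd by simp
    have "z = (\<Sum>r\<in>R. (4 * d r) *\<^sub>R bw r)"
    proof (rule vec_eq_Y)
      fix s
      have "Y (\<Sum>r\<in>R. (4 * d r) *\<^sub>R bw r) s = (\<Sum>r\<in>R. d r * \<delta> r s)"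
        by (simp add: Y_sum Y_scale Ybw)
      also have "\<dots> = d s"
      proof (cases "s \<in> U")
        case True
        then have "(\<Sum>r\<in>R. d r * \<delta> r s) = (\<Sum>r\<in>R. - (d r / u))"
          by (intro sum.cong) (auto simp: \<delta>_def R_def)
        also have "\<dots> = - sum d R / u" by (simp add: sum_negf sum_divide_distrib)
        also have "\<dots> = d t0" using sumR u2 by simp
        finally show ?thesis using dU[OF True] by simp
      next
        case False
        then have sR: "s \<in> R" by (simp add: R_def)
        have "(\<Sum>r\<in>R. d r * \<delta> r s) = (\<Sum>r\<in>R. if r = s then d r else 0)"
          using False by (intro sum.cong) (auto simp: \<delta>_def)
        also have "\<dots> = d s" using sR by simp
        finally show ?thesis .
      qed
      finally show "Y z s = Y (\<Sum>r\<in>R. (4 * d r) *\<^sub>R bw r) s" by (simp add: x(2) d_def)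
    qed
    moreover have "\<And>r. r \<in> R \<Longrightarrow> (4 * d r) *\<^sub>R bw r \<in> span (bw ` R)"
      by (intro span_scale span_base imageI)
    ultimately show "z \<in> span (bw ` R)"
      by (simp add: span_sum)
  qed
  have Ybw_R: "Y (bw r) s = (if r = s then 1/4 else 0)" if "r \<in> R" "s \<in> R" for r s
    using that by (simp add: Ybw \<delta>_def R_def)
  have inj: "inj_on bw R"
  proof
    fix r r' assume "r \<in> R" "r' \<in> R" "bw r = bw r'"
    then have "Y (bw r) r = Y (bw r') r" by simp
    then show "r = r'" using Ybw_R[of r r] Ybw_R[of r' r] \<open>r \<in> R\<close> \<open>r' \<in> R\<close>
      by (cases "r' = r") auto
  qed
  have indep: "independent (bw ` R)"
  proof (rule independent_if_scalars_zero)
    show "finite (bw ` R)" by simp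
  next
    fix f :: "real^'n \<Rightarrow> real" and v
    assume f: "(\<Sum>x\<in>bw ` R. f x *\<^sub>R x) = 0" and v: "v \<in> bw ` R"
    then obtain s where s: "s \<in> R" "v = bw s" by auto
    have "(\<Sum>r\<in>R. f (bw r) *\<^sub>R bw r) = 0" using f by (simp add: sum.reindex[OF inj])
    then have "Y (\<Sum>r\<in>R. f (bw r) *\<^sub>R bw r) s = 0" by (simp add: Y_zero)
    moreover have "Y (\<Sum>r\<in>R. f (bw r) *\<^sub>R bw r) s = (\<Sum>r\<in>R. if r = s then f (bw r) / 4 else 0)"
      unfolding Y_sum Y_scale by (intro sum.cong refl) (simp add: Ybw_R s(1))
    ultimately show "f v = 0" using s by simp
  qed
  have "dim ((+) (- a0) ` G T B) = card R"
  proof (rule dim_unique[OF _ Dspan indep])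
    show "bw ` R \<subseteq> (+) (- a0) ` G T B" using bwD by blast
    show "card (bw ` R) = card R" by (rule card_image[OF inj])
  qed
  moreover have "aff_dim (G T B) = int (dim ((+) (- a0) ` G T B))"
    by (rule aff_dim_eq_dim) (simp add: a0G hull_inc)
  ultimately show ?thesis using cardR by simp
qed



lemma count_pairs:
  fixes m :: nat
  assumes m: "1 \<le> m" "m \<le> CARD('a::finite)"
  shows "card {(T, B :: 'a set). T \<noteq> {} \<and> B \<noteq> {} \<and> T \<inter> B = {} \<and> card T + card B = m}
         = (CARD('a) choose m) * (2^m - 2)"
proof -
  define A where "A = {(T, B :: 'a set). T \<noteq> {} \<and> B \<noteq> {} \<and> T \<inter> B = {} \<and> card T + card B = m}"
  define S where "S = Sigma {U :: 'a set. U \<subseteq> UNIV \<and> card U = m} (\<lambda>U. {T. T \<subseteq> U \<and> T \<noteq> {} \<and> T \<noteq> U})"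
  have bij: "bij_betw (\<lambda>(T,B). (T \<union> B, T)) A S"
  proof (rule bij_betw_byWitness[where f' = "\<lambda>(U,T). (T, U - T)"])
    show "\<forall>a\<in>A. (\<lambda>(U, T). (T, U - T)) ((\<lambda>(T, B). (T \<union> B, T)) a) = a"
      by (auto simp: A_def)
    show "\<forall>a'\<in>S. (\<lambda>(T, B). (T \<union> B, T)) ((\<lambda>(U, T). (T, U - T)) a') = a'"
      by (auto simp: S_def)
    show "(\<lambda>(T, B). (T \<union> B, T)) ` A \<subseteq> S"
      by (auto simp: A_def S_def card_Un_disjoint)
    show "(\<lambda>(U, T). (T, U - T)) ` S \<subseteq> A"
    proof clarify
      fix U T assume "(U, T) \<in> S"
      then have U: "card U = m" "T \<subseteq> U" "T \<noteq> {}" "T \<noteq> U" by (auto simp: S_def)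
      have "card T + card (U - T) = m"
        using U by (metis card_Diff_subset finite le_add_diff_inverse card_mono)
      moreover have "U - T \<noteq> {}" using U by auto
      ultimately show "(T, U - T) \<in> A" using U by (auto simp: A_def)
    qed
  qed
  have inner: "card {T. T \<subseteq> U \<and> T \<noteq> {} \<and> T \<noteq> U} = 2^m - 2" if "card U = m" for U :: "'a set"
  proof -
    have Une: "U \<noteq> {}" using that m by auto
    have "{T. T \<subseteq> U \<and> T \<noteq> {} \<and> T \<noteq> U} = Pow U - {{}, U}" by auto
    moreover have "card (Pow U - {{}, U}) = card (Pow U) - card {{}, U}"
      by (rule card_Diff_subset) auto
    moreover have "card {{}, U} = 2" using Une by simp
    ultimately show ?thesis using that by (simp add: card_Pow)
  qed
  have "card S = (\<Sum>U\<in>{U :: 'a set. U \<subseteq> UNIV \<and> card U = m}. card {T. T \<subseteq> U \<and> T \<noteq> {} \<and> T \<noteq> U})"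
    unfolding S_def by (rule card_SigmaI) auto
  also have "\<dots> = (\<Sum>U\<in>{U :: 'a set. U \<subseteq> UNIV \<and> card U = m}. 2^m - 2)"
    by (rule sum.cong) (auto simp: inner)
  also have "\<dots> = (CARD('a) choose m) * (2^m - 2)"
    using n_subsets[of "UNIV :: 'a set" m] by simp
  finally show ?thesis using bij_betw_same_card[OF bij] by (simp add: A_def)
qed

definition vert :: "'n::finite option set \<Rightarrow> real^'n" where
  "vert T = pt (\<lambda>p. if p \<in> T then 1 else 0)"

lemma vert_comp: "(vert (T::'n::finite option set)) $ i = (if Some i \<in> T then 1 else 0) - real (card T) / real CARD('n option)"
  by (simp add: vert_def pt_comp sum.If_cases)

lemma G_vert:
  fixes T :: "'n::finite option set"
  assumes "T \<noteq> {}" "T \<noteq> UNIV"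
  shows "G T (UNIV - T) = {vert T}"
proof -
  have mem: "vert T \<in> G T (UNIV - T)"
    by (auto simp: G_def vert_def pt_in_V0 Y_pt_diff)
  have "aff_dim (G T (UNIV - T)) = int (CARD('n option) - card T - card (UNIV - T))"
    by (rule aff_dim_G) (use assms in auto)
  also have "\<dots> = 0" by (simp add: card_Diff_subset)
  finally obtain z where "G T (UNIV - T) = {z}" using aff_dim_eq_0 by blast
  then show ?thesis using mem by simp
qed

lemma vert_inj:
  fixes T T' :: "'n::finite option set"
  assumes "T \<noteq> {}" "T \<noteq> UNIV" "T' \<noteq> {}" "T' \<noteq> UNIV" "vert T = vert T'"
  shows "T = T'"
proof -
  have "G T (UNIV - T) = G T' (UNIV - T')" using G_vert assms by metis
  then show ?thesis using G_inj[of T "UNIV - T" T' "UNIV - T'"] assms by auto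
qed

lemma ext_V0:
  "{v. v extreme_point_of (V0::(real^'n::finite) set)} = vert ` {T. T \<noteq> {} \<and> T \<noteq> UNIV}"
proof (intro set_eqI iffI)
  fix x :: "real^'n" assume "x \<in> {v. v extreme_point_of V0}"
  then have f: "{x} face_of V0" by (simp add: face_of_singleton)
  have "CARD('n) \<ge> 1" by (simp add: Suc_le_eq)
  then have "{x} \<noteq> V0"
  proof -
    assume c1: "CARD('n) \<ge> 1"
    show ?thesis
    proof
      assume "{x} = V0"
      then have "aff_dim (V0::(real^'n) set) = 0" by (metis aff_dim_sing)
      then show False using aff_dim_V0[where 'n='n] c1 by simp
    qed
  qed
  then obtain T B where TB: "T \<noteq> {}" "B \<noteq> {}" "T \<inter> B = {}" "{x} = G T B"
    using face_char[OF f] by blast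
  have "aff_dim (G T B) = 0" using TB(4) by (metis aff_dim_sing)
  then have "int (CARD('n option) - card T - card B) = 0"
    using aff_dim_G[OF TB(1-3)] by simp
  then have "card T + card B \<ge> CARD('n option)" by simp
  then have "card (T \<union> B) \<ge> card (UNIV :: 'n option set)" using TB(3) by (simp add: card_Un_disjoint)
  then have "T \<union> B = UNIV" by (metis card_seteq finite top_greatest)
  then have B: "B = UNIV - T" using TB(3) by auto
  then have "T \<noteq> UNIV" using TB(2) by auto
  then have "{x} = {vert T}" using G_vert[OF TB(1)] TB(4) B by simp
  then show "x \<in> vert ` {T. T \<noteq> {} \<and> T \<noteq> UNIV}" using TB(1) \<open>T \<noteq> UNIV\<close> by auto
next
  fix x :: "real^'n" assume "x \<in> vert ` {T. T \<noteq> {} \<and> T \<noteq> UNIV}"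
  then obtain T where T: "T \<noteq> {}" "T \<noteq> UNIV" "x = vert T" by auto
  then have "{x} face_of V0" using G_face[of T "UNIV - T"] G_vert[OF T(1,2)] by simp
  then show "x \<in> {v. v extreme_point_of V0}" by (simp add: face_of_singleton)
qed

lemma card_ext_V0:
  "card {v. v extreme_point_of (V0::(real^'n::finite) set)} = 2 * (2 ^ CARD('n) - 1)"
proof -
  have "card (vert ` {T :: 'n option set. T \<noteq> {} \<and> T \<noteq> UNIV}) = card {T :: 'n option set. T \<noteq> {} \<and> T \<noteq> UNIV}"
  proof (rule card_image, rule inj_onI)
    fix T T' :: "'n option set"
    assume "T \<in> {T. T \<noteq> {} \<and> T \<noteq> UNIV}" "T' \<in> {T. T \<noteq> {} \<and> T \<noteq> UNIV}" "vert T = vert T'"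
    then show "T = T'" using vert_inj[of T T'] by auto
  qed
  also have "\<dots> = card (Pow UNIV - {{}, UNIV :: 'n option set})"
    by (rule arg_cong[where f=card]) auto
  also have "card (Pow (UNIV :: 'n option set) - {{}, UNIV}) = card (Pow (UNIV :: 'n option set)) - card {{}, UNIV :: 'n option set}"
    by (rule card_Diff_subset) auto
  also have "card {{}, UNIV :: 'n option set} = 2" by simp
  also have "card (Pow (UNIV :: 'n option set)) = 2 ^ Suc CARD('n)" by (simp add: card_Pow)
  finally have "card (vert ` {T :: 'n option set. T \<noteq> {} \<and> T \<noteq> UNIV}) = 2 ^ Suc CARD('n) - 2" .
  moreover have "(2::nat) ^ Suc CARD('n) - 2 = 2 * (2 ^ CARD('n) - 1)" by (simp add: right_diff_distrib')
  ultimately show ?thesis by (simp add: ext_V0)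
qed



lemma card_opt_split:
  fixes T :: "'n::finite option set"
  shows "card T = card {i. Some i \<in> T} + (if None \<in> T then 1 else 0)"
proof -
  have img: "card (Some ` {i. Some i \<in> T}) = card {i. Some i \<in> T}"
    by (rule card_image) (simp add: inj_on_def)
  show ?thesis
  proof (cases "None \<in> T")
    case True
    then have "T = insert None (Some ` {i. Some i \<in> T})"
      by (auto simp: image_iff) (metis option.exhaust)
    then have "card T = card (insert None (Some ` {i. Some i \<in> T}))" by simp
    also have "\<dots> = Suc (card {i. Some i \<in> T})" by (subst card_insert_disjoint) (auto simp: img)
    finally show ?thesis using True by simp
  next
    case False
    then have "T = Some ` {i. Some i \<in> T}"
      by (auto simp: image_iff) (metis option.exhaust)
    then have "card T = card (Some ` {i. Some i \<in> T})" by simp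
    then show ?thesis using False img by simp
  qed
qed

lemma bracket_eq:
  "(\<Union>k\<in>{1..CARD('n::finite)}. (bracket_k k :: (real^'n) set)) = vert ` {T. T \<noteq> {} \<and> T \<noteq> UNIV}"
proof (intro set_eqI iffI)
  fix x :: "real^'n"
  assume "x \<in> (\<Union>k\<in>{1..CARD('n)}. bracket_k k)"
  then obtain k where k: "1 \<le> k" "k \<le> CARD('n)" "x \<in> bracket_k k" by auto
  define hi where "hi = (real CARD('n) + 1 - real k) / (real CARD('n) + 1)"
  define lo where "lo = - real k / (real CARD('n) + 1)"
  have pos: "real CARD('n) + 1 > 0" by simp
  have "hi = (real CARD('n) + 1)/(real CARD('n) + 1) - real k/(real CARD('n)+1)"
    unfolding hi_def by (rule diff_divide_distrib)
  then have hilo1: "hi = 1 - real k / (real CARD('n) + 1)" "hi - lo = 1"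
    using pos by (auto simp: lo_def)
  then have hilo: "hi = 1 - real k / (real CARD('n) + 1)" "hi \<noteq> lo" by auto
  define S' where "S' = {i. x $ i = hi}"
  have xv: "\<forall>i. x $ i \<in> {lo, hi}" and cS: "card S' = k \<or> card S' = k - 1"
    using k(3) unfolding bracket_k_def hi_def lo_def S'_def Let_def by auto
  define T where "T = Some ` S' \<union> (if card S' = k then {} else {None})"
  have ST: "{i. Some i \<in> T} = S'" by (auto simp: T_def)
  have cT: "card T = k"
  proof (cases "card S' = k")
    case True
    then have "None \<notin> T" by (simp add: T_def)
    then show ?thesis using card_opt_split[of T] True by (simp add: ST)
  next
    case False
    then have "None \<in> T" "card S' = k - 1" using cS by (auto simp: T_def)
    then show ?thesis using card_opt_split[of T] k(1) by (simp add: ST)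
  qed
  have Tne: "T \<noteq> {}" using cT k(1) by auto
  have "card T < card (UNIV :: 'n option set)" using cT k(2) by simp
  then have TU: "T \<noteq> UNIV" by auto
  have "x = vert T"
  proof (subst vec_eq_iff, intro allI)
    fix i
    show "x $ i = vert T $ i"
    proof (cases "i \<in> S'")
      case True
      then have "Some i \<in> T" by (auto simp: T_def)
      then show ?thesis using True hilo(1) by (simp add: vert_comp cT S'_def)
    next
      case False
      then have "Some i \<notin> T" by (auto simp: T_def)
      moreover have "x $ i = lo" using xv False by (auto simp: S'_def)
      ultimately show ?thesis by (simp add: vert_comp cT lo_def)
    qed
  qed
  then show "x \<in> vert ` {T. T \<noteq> {} \<and> T \<noteq> UNIV}" using Tne TU by auto
next
  fix x :: "real^'n"
  assume "x \<in> vert ` {T. T \<noteq> {} \<and> T \<noteq> UNIV}"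
  then obtain T where T: "T \<noteq> {}" "T \<noteq> UNIV" "x = vert T" by auto
  define k where "k = card T"
  have k1: "1 \<le> k" using T(1) by (simp add: k_def Suc_le_eq card_gt_0_iff)
  have "card T < card (UNIV :: 'n option set)" using T(2)
    by (intro psubset_card_mono) auto
  then have k2: "k \<le> CARD('n)" by (simp add: k_def)
  define hi where "hi = (real CARD('n) + 1 - real k) / (real CARD('n) + 1)"
  define lo where "lo = - real k / (real CARD('n) + 1)"
  have pos: "real CARD('n) + 1 > 0" by simp
  have "hi = (real CARD('n) + 1)/(real CARD('n) + 1) - real k/(real CARD('n)+1)"
    unfolding hi_def by (rule diff_divide_distrib)
  then have hilo1: "hi = 1 - real k / (real CARD('n) + 1)" "hi - lo = 1"
    using pos by (auto simp: lo_def)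
  then have hilo: "hi = 1 - real k / (real CARD('n) + 1)" "hi \<noteq> lo" by auto
  have xi: "x $ i = (if Some i \<in> T then hi else lo)" for i
    using hilo(1) by (simp add: T(3) vert_comp k_def lo_def)
  have "{i. x $ i = hi} = {i. Some i \<in> T}" using xi hilo(2) by auto
  then have "card {i. x $ i = hi} = k \<or> card {i. x $ i = hi} = k - 1"
    using card_opt_split[of T] by (auto simp: k_def split: if_splits)
  moreover have "\<forall>i. x $ i \<in> {lo, hi}" using xi by auto
  ultimately have "x \<in> bracket_k k"
    unfolding bracket_k_def Let_def hi_def lo_def by auto
  then show "x \<in> (\<Union>k\<in>{1..CARD('n)}. bracket_k k)" using k1 k2 by auto
qed

lemma faces_dim:
  fixes l :: nat
  assumes l: "l < CARD('n::finite)"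
  shows "{F. F face_of (V0::(real^'n) set) \<and> aff_dim F = int l}
       = (\<lambda>(T,B). G T B) ` {(T, B). T \<noteq> {} \<and> B \<noteq> {} \<and> T \<inter> B = {} \<and> card T + card B = CARD('n option) - l}"
proof (intro set_eqI iffI)
  fix F :: "(real^'n) set" assume "F \<in> {F. F face_of (V0::(real^'n) set) \<and> aff_dim F = int l}"
  then have F: "F face_of V0" "aff_dim F = int l" by auto
  have "F \<noteq> {}" using F(2) by auto
  moreover have "F \<noteq> V0" using F(2) aff_dim_V0[where 'n='n] l by auto
  ultimately obtain T B where TB: "T \<noteq> {}" "B \<noteq> {}" "T \<inter> B = {}" "F = G T B"
    using face_char[OF F(1)] by blast
  have "card (T \<union> B) \<le> CARD('n option)" by (rule card_mono) auto
  then have le: "card T + card B \<le> CARD('n option)" using TB(3) by (simp add: card_Un_disjoint)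
  have "int (CARD('n option) - card T - card B) = int l" using aff_dim_G[OF TB(1-3)] TB(4) F(2) by simp
  then have "card T + card B = CARD('n option) - l" using le by simp
  then show "F \<in> (\<lambda>(T,B). G T B) ` {(T, B). T \<noteq> {} \<and> B \<noteq> {} \<and> T \<inter> B = {} \<and> card T + card B = CARD('n option) - l}"
    using TB by auto
next
  fix F :: "(real^'n) set" assume "F \<in> (\<lambda>(T,B). G T B) ` {(T, B). T \<noteq> {} \<and> B \<noteq> {} \<and> T \<inter> B = {} \<and> card T + card B = CARD('n option) - l}"
  then obtain T B where TB: "T \<noteq> {}" "B \<noteq> {}" "T \<inter> B = {}" "card T + card B = CARD('n option) - l" "F = G T B"
    by auto
  have "aff_dim F = int l" using aff_dim_G[OF TB(1-3)] TB(4,5) l by simp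
  then show "F \<in> {F. F face_of (V0::(real^'n) set) \<and> aff_dim F = int l}" using G_face TB(5) by auto
qed

lemma card_faces_dim:
  fixes l :: nat
  assumes l: "l < CARD('n::finite)"
  shows "card {F. F face_of (V0::(real^'n) set) \<and> aff_dim F = int l}
       = (CARD('n) + 1 choose l) * (2 ^ (CARD('n) + 1 - l) - 2)"
proof -
  let ?P = "{(T, B :: 'n option set). T \<noteq> {} \<and> B \<noteq> {} \<and> T \<inter> B = {} \<and> card T + card B = CARD('n option) - l}"
  have inj: "inj_on (\<lambda>(T,B). G T B) ?P"
  proof (rule inj_onI)
    fix x y assume "x \<in> ?P" "y \<in> ?P" "(\<lambda>(T,B). G T B) x = (\<lambda>(T,B). G T B) y"
    moreover obtain T B where "x = (T, B)" by (cases x)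
    moreover obtain T' B' where "y = (T', B')" by (cases y)
    ultimately show "x = y" using G_inj[of T B T' B'] by auto
  qed
  have "card {F. F face_of (V0::(real^'n) set) \<and> aff_dim F = int l} = card ?P"
    unfolding faces_dim[OF l] by (rule card_image[OF inj])
  also have "\<dots> = (CARD('n option) choose (CARD('n option) - l)) * (2 ^ (CARD('n option) - l) - 2)"
    by (rule count_pairs) (use l in auto)
  also have "CARD('n option) choose (CARD('n option) - l) = CARD('n option) choose l"
    using binomial_symmetric[of l "CARD('n option)"] l by simp
  finally show ?thesis by simp
qed

theorem theorem3p1:
  fixes V :: "(real ^ 'n) set"
  defines "V \<equiv> voronoi (banana_Q :: real ^ 'n ^ 'n)"
  shows "polytope V
    \<and> aff_dim V = int CARD('n)
    \<and> {v. v extreme_point_of V} = (\<Union>k\<in>{1..CARD('n)}. bracket_k k)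
    \<and> card {v. v extreme_point_of V} = 2 * (2 ^ CARD('n) - 1)
    \<and> (\<forall>l < CARD('n). card {F. F face_of V \<and> aff_dim F = int l}
          = (CARD('n) + 1 choose l) * (2 ^ (CARD('n) + 1 - l) - 2))"
proof -
  have VV: "V = V0" unfolding V_def by (rule voronoi_eq)
  show ?thesis unfolding VV
  proof (intro conjI allI impI)
    show "polytope (V0::(real^'n) set)" by (rule polytope_V0)
    show "aff_dim (V0::(real^'n) set) = int CARD('n)" by (rule aff_dim_V0)
    show "{v. v extreme_point_of (V0::(real^'n) set)} = (\<Union>k\<in>{1..CARD('n)}. bracket_k k)"
      by (rule trans[OF ext_V0 bracket_eq[symmetric]])
    show "card {v. v extreme_point_of (V0::(real^'n) set)} = 2 * (2 ^ CARD('n) - 1)"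
      by (rule card_ext_V0)
    fix l :: nat assume "l < CARD('n)"
    then show "card {F. F face_of (V0::(real^'n) set) \<and> aff_dim F = int l}
          = (CARD('n) + 1 choose l) * (2 ^ (CARD('n) + 1 - l) - 2)"
      by (rule card_faces_dim)
  qed
qed

end
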